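(* Let $D\ge 2$, $T\ge 3$, $N\ge 3$ and let $S\in(\{0\}\cup\mathbb{N}\cup\{\infty\})^{T\times N}$. Suppose there are three distinct columns $j_1,j_2,j_3$ and three distinct rows $t_1,t_2,t_3$ such that each of the columns $j_1,j_2,j_3$ has finite entries only in rows among $t_1,t_2,t_3$, and the $3\times 3$ submatrix on rows $t_1,t_2,t_3$ and columns $j_1,j_2,j_3$ has the form $$\begin{pmatrix}\delta&\varepsilon&\infty\\ \zeta&\infty&\eta\\ \infty&\vartheta&\kappa\end{pmatrix}$$ with $\delta,\varepsilon,\zeta,\eta,\vartheta,\kappa$ finite. Then $S$ is not a $(T,N,D)$-tropical code.
   Context: Tropical arithmetic on $\mathbb{R}\cup\{\infty\}$: $x\oplus y=\min(x,y)$, $x\odot y=x+y$, with $x\oplus\infty=x$ and $x\odot\infty=\infty$. For a matrix $S$ with $T$ rows and $N$ columns and a column vector $\mathbf{x}$ of length $N$, $S\odot\mathbf{x}$ is the vector whose $t$-th entry is $\min_{j}(S_{tj}+x_j)$. A $(T,N,D)$-tropical code is a matrix $S\in(\{0\}\cup\mathbb{N}\cup\{\infty\})^{T\times N}$ such that for any two distinct vectors $\mathbf{x},\mathbf{y}\in(\{0\}\cup\mathbb{N}\cup\{\infty\})^{N}$, each having at most $D$ finite entries, $S\odot\mathbf{x}\ne S\odot\mathbf{y}$. *)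

theory Defs
  imports Main "HOL-Library.Extended_Nat"
begin

text \<open>Entries in {0} \<union> \<nat> \<union> {\<infinity>} are modelled by enat; tropical addition is min,
  tropical multiplication is +. A T x N matrix is a function nat \<Rightarrow> nat \<Rightarrow> enat,
  only rows t < T and columns j < N are relevant. A vector of length N is a function
  nat \<Rightarrow> enat whose entries at indices j \<ge> N are \<infinity> (canonical representative).\<close>

definition trop_mult_vec :: "nat \<Rightarrow> (nat \<Rightarrow> nat \<Rightarrow> enat) \<Rightarrow> (nat \<Rightarrow> enat) \<Rightarrow> nat \<Rightarrow> enat" where
  "trop_mult_vec N S x t = (INF j\<in>{..<N}. S t j + x j)"

definition vec_space :: "nat \<Rightarrow> nat \<Rightarrow> (nat \<Rightarrow> enat) set" where
  "vec_space N D = {x. (\<forall>j\<ge>N. x j = \<infinity>) \<and> card {j. j < N \<and> x j \<noteq> \<infinity>} \<le> D}"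

definition tropical_code :: "nat \<Rightarrow> nat \<Rightarrow> nat \<Rightarrow> (nat \<Rightarrow> nat \<Rightarrow> enat) \<Rightarrow> bool" where
  "tropical_code T N D S \<longleftrightarrow>
     (\<forall>x\<in>vec_space N D. \<forall>y\<in>vec_space N D. x \<noteq> y \<longrightarrow>
        (\<exists>t<T. trop_mult_vec N S x t \<noteq> trop_mult_vec N S y t))"

end

theory Submission
  imports Defs
begin

lemma inf_two:
  fixes f :: "nat \<Rightarrow> enat"
  assumes "a < N" "b < N" "\<forall>j. j \<noteq> a \<and> j \<noteq> b \<longrightarrow> f j = \<infinity>"
  shows "(INF j\<in>{..<N}. f j) = min (f a) (f b)"
proof -
  have "{..<N} = {a,b} \<union> ({..<N} - {a,b})" using assms by auto
  hence "(INF j\<in>{..<N}. f j) = inf (INF j\<in>{a,b}. f j) (INF j\<in>{..<N} - {a,b}. f j)"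
    by (metis INF_union)
  also have "(INF j\<in>{..<N} - {a,b}. f j) = \<infinity>"
    using assms(3) by (auto intro!: INF_eqI)
  finally show ?thesis by (simp add: inf_min)
qed

theorem mainTheorem5:
  fixes T N D :: nat and S :: "nat \<Rightarrow> nat \<Rightarrow> enat"
    and j1 j2 j3 t1 t2 t3 :: nat
  assumes "D \<ge> 2" "T \<ge> 3" "N \<ge> 3"
    and "j1 < N" "j2 < N" "j3 < N" "j1 \<noteq> j2" "j1 \<noteq> j3" "j2 \<noteq> j3"
    and "t1 < T" "t2 < T" "t3 < T" "t1 \<noteq> t2" "t1 \<noteq> t3" "t2 \<noteq> t3"
    and "\<forall>j\<in>{j1, j2, j3}. \<forall>t<T. S t j \<noteq> \<infinity> \<longrightarrow> t \<in> {t1, t2, t3}"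
    and "S t1 j1 \<noteq> \<infinity>" "S t1 j2 \<noteq> \<infinity>" "S t1 j3 = \<infinity>"
    and "S t2 j1 \<noteq> \<infinity>" "S t2 j2 = \<infinity>" "S t2 j3 \<noteq> \<infinity>"
    and "S t3 j1 = \<infinity>" "S t3 j2 \<noteq> \<infinity>" "S t3 j3 \<noteq> \<infinity>"
  shows "\<not> tropical_code T N D S"
proof
  assume tc: "tropical_code T N D S"
  obtain d e z h th k where v: "S t1 j1 = enat d" "S t1 j2 = enat e" "S t2 j1 = enat z"
    "S t2 j3 = enat h" "S t3 j2 = enat th" "S t3 j3 = enat k"
    using assms(17,18,20,22,24,25) by (metis not_enat_eq)
  define x :: "nat \<Rightarrow> enat" where "x = (\<lambda>j. if j = j1 then 0 else if j = j2 then enat (k+d+z) else \<infinity>)"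
  define y :: "nat \<Rightarrow> enat" where "y = (\<lambda>j. if j = j1 then 0 else if j = j3 then enat (th+d+z) else \<infinity>)"
  have cx: "{j. j < N \<and> x j \<noteq> \<infinity>} = {j1, j2}" using assms(4,5) by (auto simp: x_def zero_enat_def)
  have cy: "{j. j < N \<and> y j \<noteq> \<infinity>} = {j1, j3}" using assms(4,6) by (auto simp: y_def zero_enat_def)
  have xv: "x \<in> vec_space N D" unfolding vec_space_def using cx assms(1,4,5)
    by (auto simp: x_def card_insert_if)
  have yv: "y \<in> vec_space N D" unfolding vec_space_def using cy assms(1,4,6)
    by (auto simp: y_def card_insert_if)
  have ne: "x \<noteq> y"
  proof
    assume "x = y" hence "x j2 = y j2" by simp
    thus False using assms(7,9) by (simp add: x_def y_def)
  qed
  have px: "trop_mult_vec N S x t = min (S t j1) (S t j2 + enat (k+d+z))" for t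
    unfolding trop_mult_vec_def
    by (subst inf_two[OF assms(4,5)]) (auto simp: x_def assms(7))
  have py: "trop_mult_vec N S y t = min (S t j1) (S t j3 + enat (th+d+z))" for t
    unfolding trop_mult_vec_def
    by (subst inf_two[OF assms(4,6)]) (auto simp: y_def assms(8))
  have eq: "trop_mult_vec N S x t = trop_mult_vec N S y t" if "t < T" for t
  proof -
    consider "t = t1" | "t = t2" | "t = t3" | "t \<notin> {t1,t2,t3}" by blast
    thus ?thesis
    proof cases
      case 1 thus ?thesis using v assms(19) by (simp add: px py)
    next
      case 2 thus ?thesis using v assms(21) by (simp add: px py)
    next
      case 3 thus ?thesis using v assms(23) by (simp add: px py add.commute add.left_commute)
    next
      case 4
      hence "S t j1 = \<infinity>" "S t j2 = \<infinity>" "S t j3 = \<infinity>" using assms(16) that by auto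
      thus ?thesis by (simp add: px py)
    qed
  qed
  show False using tc xv yv ne eq unfolding tropical_code_def by blast
qed

end
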